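(* Let $c:\mathcal H\times\mathcal K\to[0,1]$ be any classifier, let $m,n$ be positive integers and let $\delta\in(0,1]$. If $S$ is a random sample drawn by the two-stage sampling scheme described in the context (with $m$ raters and $n$ examples per rater), then with probability at least $1-\delta$, $$\bigl|L_{\mathcal D}(c)-L_S(c)\bigr|\;\le\;\frac{1}{3m}\left[g+\sqrt{g^2+18\,g\,m\left(\frac1n\,\mathbb E[\mathbb V(\ell_c\mid H)]+\mathbb V(\mathbb E[\ell_c\mid H])\right)}\right],\qquad g:=\ln(2/\delta).$$
   Context: Setting. $\mathcal H$ is a set of users, $\mathcal X$ a set of contexts, $\mathcal Y$ a set of responses, $\mathcal K:=\mathcal X\times\mathcal Y\times\mathcal Y$, and $\mathcal Z:=\{0,1\}$. $\mathcal D$ is a probability distribution on $\mathcal H\times\mathcal K\times\mathcal Z$; $\mathcal D_{\mathcal H}$ denotes its marginal on $\mathcal H$ and $\mathcal D^h$ the conditional distribution of $(K,Z)$ given $H=h$. A classifier is a (measurable) map $c:\mathcal H\times\mathcal K\to[0,1]$. A loss is a map $\ell:[0,1]\times\mathcal Z\to[0,1]$ (values assumed to lie in $[0,1]$). Sampling scheme: $h_1,\dots,h_m$ are drawn i.i.d. from $\mathcal D_{\mathcal H}$; conditionally on $h_i$, pairs $(k_{ij},z_{ij})$, $j=1,\dots,n$, are drawn i.i.d. from $\mathcal D^{h_i}$, independently across $i$; $S=\{(h_i,k_{ij},z_{ij})\}_{i\le m,j\le n}$. Losses: $L_{\mathcal D}(c):=\mathbb E_{(H,K,Z)\sim\mathcal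 D}[\ell(c(H,K),Z)]$ and $L_S(c):=\frac1{mn}\sum_{i=1}^m\sum_{j=1}^n\ell(c(h_i,k_{ij}),z_{ij})$. Write $\ell_c:=\ell(c(H,K),Z)$ with $(H,K,Z)\sim\mathcal D$; $\mathbb E[\mathbb V(\ell_c\mid H)]$ is the expected conditional variance of $\ell_c$ given $H$, and $\mathbb V(\mathbb E[\ell_c\mid H])$ is the variance of the conditional mean of $\ell_c$ given $H$. *)

theory Defs
  imports "HOL-Probability.Probability"
begin

text \<open>The distribution D on H x K x Z is given by its marginal MH on users
  together with a (measurable) regular conditional distribution Dc h = D^h on K x Z,
  where Z = {0,1} is modelled by bool with the discrete sigma-algebra.\<close>

definition KZ :: "'k measure \<Rightarrow> ('k \<times> bool) measure" where
  "KZ MK = MK \<Otimes>\<^sub>M count_space UNIV"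

definition jointD :: "'h measure \<Rightarrow> 'k measure \<Rightarrow> ('h \<Rightarrow> ('k \<times> bool) measure)
    \<Rightarrow> ('h \<times> 'k \<times> bool) measure" where
  "jointD MH MK Dc = MH \<bind> (\<lambda>h. distr (Dc h) (MH \<Otimes>\<^sub>M KZ MK) (\<lambda>kz. (h, kz)))"

definition L_D :: "'h measure \<Rightarrow> 'k measure \<Rightarrow> ('h \<Rightarrow> ('k \<times> bool) measure)
    \<Rightarrow> (real \<Rightarrow> bool \<Rightarrow> real) \<Rightarrow> ('h \<Rightarrow> 'k \<Rightarrow> real) \<Rightarrow> real" where
  "L_D MH MK Dc loss c = (\<integral>(h,k,z). loss (c h k) z \<partial>jointD MH MK Dc)"

definition cond_mean :: "('h \<Rightarrow> ('k \<times> bool) measure) \<Rightarrow> (real \<Rightarrow> bool \<Rightarrow> real)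
    \<Rightarrow> ('h \<Rightarrow> 'k \<Rightarrow> real) \<Rightarrow> 'h \<Rightarrow> real" where
  "cond_mean Dc loss c h = (\<integral>(k,z). loss (c h k) z \<partial>Dc h)"

definition cond_var :: "('h \<Rightarrow> ('k \<times> bool) measure) \<Rightarrow> (real \<Rightarrow> bool \<Rightarrow> real)
    \<Rightarrow> ('h \<Rightarrow> 'k \<Rightarrow> real) \<Rightarrow> 'h \<Rightarrow> real" where
  "cond_var Dc loss c h = (\<integral>(k,z). (loss (c h k) z - cond_mean Dc loss c h)\<^sup>2 \<partial>Dc h)"

definition exp_cond_var :: "'h measure \<Rightarrow> ('h \<Rightarrow> ('k \<times> bool) measure) \<Rightarrow> (real \<Rightarrow> bool \<Rightarrow> real)
    \<Rightarrow> ('h \<Rightarrow> 'k \<Rightarrow> real) \<Rightarrow> real" where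
  "exp_cond_var MH Dc loss c = (\<integral>h. cond_var Dc loss c h \<partial>MH)"

definition var_cond_mean :: "'h measure \<Rightarrow> ('h \<Rightarrow> ('k \<times> bool) measure) \<Rightarrow> (real \<Rightarrow> bool \<Rightarrow> real)
    \<Rightarrow> ('h \<Rightarrow> 'k \<Rightarrow> real) \<Rightarrow> real" where
  "var_cond_mean MH Dc loss c =
     (\<integral>h. (cond_mean Dc loss c h - (\<integral>h'. cond_mean Dc loss c h' \<partial>MH))\<^sup>2 \<partial>MH)"

text \<open>Two-stage sampling: a sample is a map i < m \<mapsto> (h_i, (j < n \<mapsto> (k_ij, z_ij))).
  Each block: h ~ MH, then n i.i.d. draws from Dc h; blocks independent.\<close>
definition rater_block :: "'h measure \<Rightarrow> 'k measure \<Rightarrow> ('h \<Rightarrow> ('k \<times> bool) measure) \<Rightarrow> nat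
    \<Rightarrow> ('h \<times> (nat \<Rightarrow> 'k \<times> bool)) measure" where
  "rater_block MH MK Dc n =
     MH \<bind> (\<lambda>h. distr (PiM {..<n} (\<lambda>j. Dc h))
                        (MH \<Otimes>\<^sub>M PiM {..<n} (\<lambda>j. KZ MK)) (\<lambda>ks. (h, ks)))"

definition sample_measure :: "'h measure \<Rightarrow> 'k measure \<Rightarrow> ('h \<Rightarrow> ('k \<times> bool) measure)
    \<Rightarrow> nat \<Rightarrow> nat \<Rightarrow> (nat \<Rightarrow> 'h \<times> (nat \<Rightarrow> 'k \<times> bool)) measure" where
  "sample_measure MH MK Dc m n = PiM {..<m} (\<lambda>i. rater_block MH MK Dc n)"

definition L_S :: "nat \<Rightarrow> nat \<Rightarrow> (real \<Rightarrow> bool \<Rightarrow> real) \<Rightarrow> ('h \<Rightarrow> 'k \<Rightarrow> real)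
    \<Rightarrow> (nat \<Rightarrow> 'h \<times> (nat \<Rightarrow> 'k \<times> bool)) \<Rightarrow> real" where
  "L_S m n loss c S = (1 / (real m * real n)) *
     (\<Sum>i<m. \<Sum>j<n. loss (c (fst (S i)) (fst (snd (S i) j))) (snd (snd (S i) j)))"

end

theory Submission
  imports Defs
begin


lemma fact_ge_pow3: "2 * 3 ^ k \<le> (fact (k + 2) :: real)"
proof (induction k)
  case 0 then show ?case by simp
next
  case (Suc k)
  have "fact (Suc k + 2) = real (k + 3) * (fact (k + 2) :: real)"
    by (simp add: fact_Suc algebra_simps)
  also have "\<dots> \<ge> 3 * (2 * 3 ^ k)"
    using Suc by (intro mult_mono) auto
  finally show ?case by simp
qed

lemma exp_bernstein_bound:
  fixes u a :: real
  assumes "\<bar>u\<bar> \<le> a" "a < 3"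
  shows "exp u \<le> 1 + u + u\<^sup>2 / (2 * (1 - a / 3))"
proof -
  have s1: "(\<lambda>k. u ^ (k + 2) / fact (k + 2)) sums (exp u - (\<Sum>i<2. u ^ i / fact i))"
    using sums_split_initial_segment[OF exp_converges[of u], of 2]
    by (simp add: divide_inverse mult.commute)
  have s1': "(\<Sum>i<2. u ^ i / fact i) = 1 + u"
    by (simp add: numeral_2_eq_2)
  have ua: "\<bar>u\<bar> / 3 < 1" using assms by simp
  have s2: "(\<lambda>k. u\<^sup>2 / 2 * (\<bar>u\<bar> / 3) ^ k) sums (u\<^sup>2 / 2 * (1 / (1 - \<bar>u\<bar> / 3)))"
    using geometric_sums[of "\<bar>u\<bar>/3"] ua by (intro sums_mult) auto
  have le: "u ^ (k + 2) / fact (k + 2) \<le> u\<^sup>2 / 2 * (\<bar>u\<bar> / 3) ^ k" for k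
  proof -
    have "u ^ (k + 2) \<le> \<bar>u\<bar> ^ (k + 2)" by (metis abs_ge_self power_abs)
    also have "\<dots> = u\<^sup>2 * \<bar>u\<bar> ^ k" by (simp add: power_add power2_eq_square mult.commute)
    finally have "u ^ (k + 2) / fact (k + 2) \<le> u\<^sup>2 * \<bar>u\<bar> ^ k / fact (k + 2)"
      by (intro divide_right_mono) auto
    also have "\<dots> \<le> u\<^sup>2 * \<bar>u\<bar> ^ k / (2 * 3 ^ k)"
      by (intro divide_left_mono fact_ge_pow3) auto
    also have "\<dots> = u\<^sup>2 / 2 * (\<bar>u\<bar> / 3) ^ k" by (simp add: power_divide)
    finally show ?thesis .
  qed
  have "exp u - (1 + u) \<le> u\<^sup>2 / 2 * (1 / (1 - \<bar>u\<bar> / 3))"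
    using sums_le[OF le s1 s2] s1' by simp
  also have "\<dots> \<le> u\<^sup>2 / 2 * (1 / (1 - a / 3))"
    using assms by (intro mult_left_mono divide_left_mono mult_pos_pos) auto
  finally show ?thesis by simp
qed



lemma lambda_choice:
  fixes t V :: real
  assumes "t > 0" "V \<ge> 0"
  shows "\<exists>l>0. l < 3 \<and> -l*t + l\<^sup>2*V/(2*(1-l/3)) \<le> -(t\<^sup>2/(2*V + 2*t/3))"
proof (cases "V = 0")
  case True
  show ?thesis
    by (rule exI[of _ 2]) (use assms True in \<open>auto simp: field_simps power2_eq_square\<close>)
next
  case False
  with assms have V: "V > 0" by simp
  define D where "D = 3*V + t"
  have D: "D > 0" using assms V by (simp add: D_def)
  define l where "l = 3*t / D"
  have l0: "l > 0" using assms D by (simp add: l_def)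
  have l3: "l < 3" using assms V D by (simp add: l_def D_def field_simps)
  have e1: "1 - l/3 = 3*V/D" using D by (simp add: l_def D_def field_simps)
  have e2: "l\<^sup>2*V/(2*(1-l/3)) = 3*t\<^sup>2/(2*D)"
    unfolding e1 using D V by (simp add: l_def field_simps power2_eq_square)
  have e3: "t\<^sup>2/(2*V + 2*t/3) = 3*t\<^sup>2/(2*D)"
    using D by (simp add: D_def field_simps)
  have "-l*t + l\<^sup>2*V/(2*(1-l/3)) = -(t\<^sup>2/(2*V + 2*t/3))"
    unfolding e2 e3 using D by (simp add: l_def field_simps power2_eq_square)
  then show ?thesis using l0 l3 by auto
qed

lemma bernstein_iid:
  fixes R :: "'a measure" and Z :: "'a \<Rightarrow> real"
  assumes R: "prob_space R" and Zm[measurable]: "Z \<in> borel_measurable R"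
    and Zb: "\<And>x. x \<in> space R \<Longrightarrow> \<bar>Z x\<bar> \<le> 1"
    and EZ: "(\<integral>x. Z x \<partial>R) = 0" and VZ: "(\<integral>x. (Z x)\<^sup>2 \<partial>R) \<le> V"
    and t: "t > 0" and V: "V \<ge> 0"
  shows "measure (PiM {..<m} (\<lambda>_. R)) {S \<in> space (PiM {..<m} (\<lambda>_. R)). real m * t \<le> (\<Sum>i<m. Z (S i))}
           \<le> exp (- (real m * (t\<^sup>2 / (2*V + 2*t/3))))"
proof -
  interpret R: prob_space R by (rule R)
  interpret P: product_prob_space "\<lambda>_. R" "{..<m}"
    by unfold_locales
  define P where "P = PiM {..<m} (\<lambda>_. R)"
  interpret PP: prob_space P unfolding P_def by (rule P.P.prob_space_axioms)
  obtain l where l: "l > 0" "l < 3" and lb: "-l*t + l\<^sup>2*V/(2*(1-l/3)) \<le> -(t\<^sup>2/(2*V + 2*t/3))"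
    using lambda_choice[OF t V] by blast
  define q where "q = l\<^sup>2/(2*(1-l/3))"
  have q: "q \<ge> 0" using l by (simp add: q_def)
  have intZ: "integrable R Z"
    by (rule R.integrable_const_bound[where B=1]) (use Zb in auto)
  have intZ2: "integrable R (\<lambda>x. (Z x)\<^sup>2)"
    by (rule R.integrable_const_bound[where B=1]) (use Zb in \<open>auto intro!: AE_I2 simp: abs_square_le_1\<close>)
  have pt: "exp (l * Z x) \<le> 1 + l * Z x + q * (Z x)\<^sup>2" if "x \<in> space R" for x
  proof -
    have "\<bar>l * Z x\<bar> \<le> l" using Zb[OF that] l by (simp add: abs_mult mult_left_le)
    from exp_bernstein_bound[OF this l(2)] show ?thesis
      by (simp add: q_def power_mult_distrib)
  qed
  have mgf: "(\<integral>\<^sup>+x. ennreal (exp (l * Z x)) \<partial>R) \<le> ennreal (exp (q * V))"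
  proof -
    have "(\<integral>\<^sup>+x. ennreal (exp (l * Z x)) \<partial>R) \<le> (\<integral>\<^sup>+x. ennreal (1 + l * Z x + q * (Z x)\<^sup>2) \<partial>R)"
      by (intro nn_integral_mono ennreal_leI pt)
    also have "\<dots> = ennreal (\<integral>x. 1 + l * Z x + q * (Z x)\<^sup>2 \<partial>R)"
    proof (rule nn_integral_eq_integral)
      show "integrable R (\<lambda>x. 1 + l * Z x + q * (Z x)\<^sup>2)"
        using intZ intZ2 by auto
      show "AE x in R. 0 \<le> 1 + l * Z x + q * (Z x)\<^sup>2"
        using pt by (intro AE_I2) (smt (verit) exp_gt_zero)
    qed
    also have "(\<integral>x. 1 + l * Z x + q * (Z x)\<^sup>2 \<partial>R) = 1 + l * (\<integral>x. Z x \<partial>R) + q * (\<integral>x. (Z x)\<^sup>2 \<partial>R)"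
      using intZ intZ2 by (simp add: R.prob_space)
    also have "\<dots> \<le> 1 + q * V" using EZ VZ q by (simp add: mult_left_mono)
    also have "\<dots> \<le> exp (q * V)" by (rule exp_ge_add_one_self)
    finally show ?thesis by (simp add: ennreal_leI)
  qed
  have "emeasure P {S \<in> space P. real m * t \<le> (\<Sum>i<m. Z (S i))} \<le>
        ennreal (exp (-l * (real m * t))) *
          (\<integral>\<^sup>+S. ennreal (exp (l * (\<Sum>i<m. Z (S i)))) * indicator (space P) S \<partial>P)"
    by (rule Chernoff_ineq_nn_integral_ge) (use l in \<open>auto simp: P_def\<close>)
  also have "(\<integral>\<^sup>+S. ennreal (exp (l * (\<Sum>i<m. Z (S i)))) * indicator (space P) S \<partial>P)
      = (\<integral>\<^sup>+S. (\<Prod>i\<in>{..<m}. ennreal (exp (l * Z (S i)))) \<partial>P)"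
    by (intro nn_integral_cong)
       (simp add: sum_distrib_left exp_sum prod_ennreal)
  also have "\<dots> = (\<Prod>i\<in>{..<m}. (\<integral>\<^sup>+x. ennreal (exp (l * Z x)) \<partial>R))"
    unfolding P_def by (rule P.product_nn_integral_prod) auto
  also have "ennreal (exp (-l * (real m * t))) * \<dots> \<le> ennreal (exp (-l * (real m * t))) * (\<Prod>i\<in>{..<m}. ennreal (exp (q * V)))"
    by (intro mult_left_mono prod_mono_ennreal mgf) auto
  also have "(\<Prod>i\<in>{..<m}. ennreal (exp (q * V))) = ennreal (exp (q * V) ^ m)"
    by (simp add: ennreal_power)
  also have "ennreal (exp (-l * (real m * t))) * ennreal (exp (q * V) ^ m)
       = ennreal (exp (-l * (real m * t)) * exp (q * V) ^ m)"
    by (simp add: ennreal_mult)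
  also have "exp (-l * (real m * t)) * exp (q * V) ^ m = exp (real m * (-l * t + q * V))"
    by (simp add: exp_of_nat_mult[symmetric] exp_add[symmetric] algebra_simps)
  also have "\<dots> \<le> ennreal (exp (- (real m * (t\<^sup>2 / (2*V + 2*t/3)))))"
  proof -
    have lb': "-l*t + q*V \<le> -(t\<^sup>2/(2*V + 2*t/3))" using lb by (simp add: q_def)
    have "real m * (-l*t + q*V) \<le> real m * (-(t\<^sup>2/(2*V + 2*t/3)))"
      by (rule mult_left_mono[OF lb']) simp
    then have "exp (real m * (-l * t + q * V)) \<le> exp (- (real m * (t\<^sup>2 / (2*V + 2*t/3))))"
      by simp
    then show ?thesis by (rule ennreal_leI)
  qed
  finally show ?thesis
    unfolding P_def[symmetric]
    by (subst (asm) PP.emeasure_eq_measure) (simp add: ennreal_le_iff)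
qed



lemma PiM_component_integral:
  fixes g :: "'a \<Rightarrow> real"
  assumes "prob_space M" "j \<in> I" and [measurable]: "g \<in> borel_measurable M"
  shows "(\<integral>x. g (x j) \<partial>PiM I (\<lambda>_. M)) = (\<integral>x. g x \<partial>M)"
proof -
  have "(\<integral>x. g (x j) \<partial>PiM I (\<lambda>_. M)) = (\<integral>x. g x \<partial>distr (PiM I (\<lambda>_. M)) M (\<lambda>x. x j))"
    using assms(2) by (intro integral_distr[symmetric]) auto
  also have "distr (PiM I (\<lambda>_. M)) M (\<lambda>x. x j) = M"
    using assms(1,2) by (rule distr_PiM_component)
  finally show ?thesis .
qed

lemma PiM_pair_integral:
  fixes g h :: "'a \<Rightarrow> real"
  assumes "prob_space M" "finite I" "j \<in> I" "k \<in> I" "j \<noteq> k"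
    and "integrable M g" "integrable M h"
  shows "(\<integral>x. g (x j) * h (x k) \<partial>PiM I (\<lambda>_. M)) = (\<integral>x. g x \<partial>M) * (\<integral>x. h x \<partial>M)"
proof -
  interpret M: prob_space M by (rule assms(1))
  interpret P: product_prob_space "\<lambda>_. M" I
    by unfold_locales
  define F where "F = (\<lambda>i. if i = j then g else if i = k then h else (\<lambda>_. 1::real))"
  have eq: "(\<Prod>i\<in>I. F i (x i)) = g (x j) * h (x k)" for x
  proof -
    have "(\<Prod>i\<in>I. F i (x i)) = F j (x j) * (\<Prod>i\<in>I - {j}. F i (x i))"
      using assms by (simp add: prod.remove)
    also have "(\<Prod>i\<in>I - {j}. F i (x i)) = F k (x k) * (\<Prod>i\<in>I - {j} - {k}. F i (x i))"
      using assms by (intro prod.remove) auto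
    also have "(\<Prod>i\<in>I - {j} - {k}. F i (x i)) = 1"
      by (intro prod.neutral) (auto simp: F_def)
    finally show ?thesis using assms by (simp add: F_def)
  qed
  have "(\<integral>x. g (x j) * h (x k) \<partial>PiM I (\<lambda>_. M)) = (\<integral>x. (\<Prod>i\<in>I. F i (x i)) \<partial>PiM I (\<lambda>_. M))"
    by (simp only: eq)
  also have "\<dots> = (\<Prod>i\<in>I. (\<integral>x. F i x \<partial>M))"
    using assms by (intro P.product_integral_prod) (auto simp: F_def)
  also have "(\<Prod>i\<in>I. (\<integral>x. F i x \<partial>M)) = (\<integral>x. F j x \<partial>M) * (\<Prod>i\<in>I - {j}. (\<integral>x. F i x \<partial>M))"
    using assms by (simp add: prod.remove)
  also have "(\<Prod>i\<in>I - {j}. (\<integral>x. F i x \<partial>M)) = (\<integral>x. F k x \<partial>M) * (\<Prod>i\<in>I - {j} - {k}. (\<integral>x. F i x \<partial>M))"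
    using assms by (intro prod.remove) auto
  also have "(\<Prod>i\<in>I - {j} - {k}. (\<integral>x. F i x \<partial>M)) = 1"
    by (intro prod.neutral) (auto simp: F_def M.prob_space)
  finally show ?thesis using assms by (simp add: F_def)
qed

lemma PiM_mean_var:
  fixes M :: "'a measure" and f :: "'a \<Rightarrow> real" and n :: nat
  assumes M: "prob_space M" and fm[measurable]: "f \<in> borel_measurable M"
    and fb: "\<And>x. x \<in> space M \<Longrightarrow> \<bar>f x\<bar> \<le> 1" and n: "n > 0"
  shows "(\<integral>x. (\<Sum>j<n. f (x j)) / n \<partial>PiM {..<n} (\<lambda>_. M)) = (\<integral>x. f x \<partial>M)"
    and "(\<integral>x. ((\<Sum>j<n. f (x j)) / n - a)\<^sup>2 \<partial>PiM {..<n} (\<lambda>_. M))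
           = (\<integral>x. (f x - (\<integral>x. f x \<partial>M))\<^sup>2 \<partial>M) / n + ((\<integral>x. f x \<partial>M) - a)\<^sup>2"
proof -
  interpret M: prob_space M by (rule M)
  interpret P: product_prob_space "\<lambda>_. M" "{..<n}"
    by unfold_locales
  define P where "P = PiM {..<n} (\<lambda>_. M)"
  interpret PP: prob_space P unfolding P_def by (rule P.P.prob_space_axioms)
  define mu where "mu = (\<integral>x. f x \<partial>M)"
  define v where "v = (\<integral>x. (f x - mu)\<^sup>2 \<partial>M)"
  define d where "d = (\<lambda>x. f x - mu)"
  have [measurable]: "d \<in> borel_measurable M" unfolding d_def by measurable
  have intf: "integrable M f"
    by (rule M.integrable_const_bound[where B=1]) (use fb in auto)
  have mub: "\<bar>mu\<bar> \<le> 1"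
  proof -
    have "\<bar>mu\<bar> \<le> (\<integral>x. \<bar>f x\<bar> \<partial>M)" unfolding mu_def by (rule integral_abs_bound)
    also have "\<dots> \<le> (\<integral>x. 1 \<partial>M)"
      using fb intf by (intro integral_mono) auto
    finally show ?thesis by (simp add: M.prob_space)
  qed
  have db: "\<bar>d x\<bar> \<le> 2" if "x \<in> space M" for x
    using fb[OF that] mub unfolding d_def by linarith
  have intd: "integrable M d"
    by (rule M.integrable_const_bound[where B=2]) (use db in auto)
  have Ed: "(\<integral>x. d x \<partial>M) = 0"
    unfolding d_def using intf by (simp add: mu_def M.prob_space)
  have spc: "x j \<in> space M" if "x \<in> space P" "j < n" for x j
    using that by (auto simp: P_def space_PiM PiE_iff)
  have intP: "integrable P g" if "g \<in> borel_measurable P" "\<And>x. x \<in> space P \<Longrightarrow> \<bar>g x\<bar> \<le> C" for g and C :: real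
    by (rule PP.integrable_const_bound[where B=C]) (use that in auto)
  have comp: "(\<integral>x. g (x j) \<partial>P) = (\<integral>x. g x \<partial>M)" if "j < n" "g \<in> borel_measurable M" for g :: "'a \<Rightarrow> real" and j
    using PiM_component_integral[OF M, of j "{..<n}" g] that by (simp add: P_def)
  have intdj: "integrable P (\<lambda>x. d (x j))" if "j < n" for j
    by (rule intP[of _ 2]) (use that spc db in \<open>auto simp: P_def\<close>)
  have intdjk: "integrable P (\<lambda>x. d (x j) * d (x k))" if "j < n" "k < n" for j k
  proof (rule intP[of _ 4])
    fix x assume "x \<in> space P"
    then have "\<bar>d (x j)\<bar> \<le> 2" "\<bar>d (x k)\<bar> \<le> 2" using that spc db by auto
    then show "\<bar>d (x j) * d (x k)\<bar> \<le> 4" unfolding abs_mult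
      using mult_mono[of "\<bar>d (x j)\<bar>" 2 "\<bar>d (x k)\<bar>" 2] by simp
  qed (use that in \<open>auto simp: P_def\<close>)
  have Edjk: "(\<integral>x. d (x j) * d (x k) \<partial>P) = (if j = k then v else 0)" if "j < n" "k < n" for j k
  proof (cases "j = k")
    case True
    have "(\<integral>x. d (x j) * d (x k) \<partial>P) = (\<integral>x. (\<lambda>y. (d y)\<^sup>2) (x j) \<partial>P)"
      using True by (simp add: power2_eq_square)
    also have "\<dots> = (\<integral>x. (d x)\<^sup>2 \<partial>M)" using that by (intro comp) auto
    finally show ?thesis using True by (simp add: v_def d_def)
  next
    case False
    have "(\<integral>x. d (x j) * d (x k) \<partial>P) = (\<integral>x. d x \<partial>M) * (\<integral>x. d x \<partial>M)"
      unfolding P_def using that False intd by (intro PiM_pair_integral M) auto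
    then show ?thesis using False Ed by simp
  qed
  have Edj: "(\<integral>x. d (x j) \<partial>P) = 0" if "j < n" for j
    using comp[OF that, of d] Ed by simp
  have intfj: "integrable P (\<lambda>x. f (x j))" if "j < n" for j
    by (rule intP[of _ 1]) (use that spc fb in \<open>auto simp: P_def\<close>)
  show "(\<integral>x. (\<Sum>j<n. f (x j)) / n \<partial>PiM {..<n} (\<lambda>_. M)) = (\<integral>x. f x \<partial>M)"
  proof -
    have "(\<integral>x. (\<Sum>j<n. f (x j)) / n \<partial>P) = (\<Sum>j<n. (\<integral>x. f (x j) \<partial>P)) / n"
      using intfj by (simp add: Bochner_Integration.integral_sum)
    also have "\<dots> = (\<Sum>j<n. mu) / n" using comp[OF _ fm] by (simp add: mu_def)
    finally show ?thesis using n by (simp add: P_def mu_def)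
  qed
  have eq: "((\<Sum>j<n. f (x j)) / n - a)\<^sup>2
       = (\<Sum>j<n. \<Sum>k<n. d (x j) * d (x k)) / (real n)\<^sup>2 + 2 * (mu - a) / n * (\<Sum>j<n. d (x j)) + (mu - a)\<^sup>2"
    for x
  proof -
    define s where "s = (\<Sum>j<n. d (x j))"
    have e1: "(\<Sum>j<n. f (x j)) / n - a = s / n + (mu - a)"
      using n by (simp add: s_def d_def sum_subtractf field_simps)
    have e2: "s * s = (\<Sum>j<n. \<Sum>k<n. d (x j) * d (x k))"
      unfolding s_def by (simp add: sum_product)
    have e3: "(s / n + (mu - a))\<^sup>2 = (s * s) / (real n)\<^sup>2 + 2 * (mu - a) / n * s + (mu - a)\<^sup>2"
      using n by (simp add: field_simps power2_eq_square)
    have "((\<Sum>j<n. f (x j)) / n - a)\<^sup>2 = (s / n + (mu - a))\<^sup>2" by (simp only: e1)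
    also have "\<dots> = (s * s) / (real n)\<^sup>2 + 2 * (mu - a) / n * s + (mu - a)\<^sup>2" by (rule e3)
    also note e2
    finally show ?thesis by (simp only: s_def)
  qed
  have "(\<integral>x. ((\<Sum>j<n. f (x j)) / n - a)\<^sup>2 \<partial>P)
      = (\<integral>x. (\<Sum>j<n. \<Sum>k<n. d (x j) * d (x k)) / (real n)\<^sup>2 + 2 * (mu - a) / n * (\<Sum>j<n. d (x j)) + (mu - a)\<^sup>2 \<partial>P)"
    by (simp only: eq)
  also have "\<dots> = (\<Sum>j<n. \<Sum>k<n. (\<integral>x. d (x j) * d (x k) \<partial>P)) / (real n)\<^sup>2
                   + 2 * (mu - a) / n * (\<Sum>j<n. (\<integral>x. d (x j) \<partial>P)) + (mu - a)\<^sup>2"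
  proof -
    define A where "A = (\<lambda>x. (\<Sum>j<n. \<Sum>k<n. d (x j) * d (x k)))"
    define B where "B = (\<lambda>x. (\<Sum>j<n. d (x j)))"
    define cc where "cc = 2 * (mu - a) / n"
    have iA: "integrable P A" unfolding A_def
      by (intro Bochner_Integration.integrable_sum) (use intdjk in auto)
    have iB: "integrable P B" unfolding B_def
      by (intro Bochner_Integration.integrable_sum) (use intdj in auto)
    have "(\<integral>x. A x / (real n)\<^sup>2 + cc * B x + (mu - a)\<^sup>2 \<partial>P)
        = (\<integral>x. A x / (real n)\<^sup>2 + cc * B x \<partial>P) + (\<integral>x. (mu - a)\<^sup>2 \<partial>P)"
      by (rule Bochner_Integration.integral_add) (use iA iB in auto)
    also have "(\<integral>x. A x / (real n)\<^sup>2 + cc * B x \<partial>P) = (\<integral>x. A x / (real n)\<^sup>2 \<partial>P) + (\<integral>x. cc * B x \<partial>P)"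
      by (rule Bochner_Integration.integral_add) (use iA iB in auto)
    also have "(\<integral>x. A x / (real n)\<^sup>2 \<partial>P) = (\<integral>x. A x \<partial>P) / (real n)\<^sup>2"
      by (rule integral_divide_zero)
    also have "(\<integral>x. cc * B x \<partial>P) = cc * (\<integral>x. B x \<partial>P)"
      by (rule integral_mult_right_zero)
    also have "(\<integral>x. A x \<partial>P) = (\<Sum>j<n. \<Sum>k<n. (\<integral>x. d (x j) * d (x k) \<partial>P))"
    proof -
      have "(\<integral>x. A x \<partial>P) = (\<Sum>j<n. (\<integral>x. (\<Sum>k<n. d (x j) * d (x k)) \<partial>P))"
        unfolding A_def by (rule Bochner_Integration.integral_sum)
          (intro Bochner_Integration.integrable_sum, use intdjk in auto)
      also have "\<dots> = (\<Sum>j<n. \<Sum>k<n. (\<integral>x. d (x j) * d (x k) \<partial>P))"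
        by (intro sum.cong refl Bochner_Integration.integral_sum) (use intdjk in auto)
      finally show ?thesis .
    qed
    also have "(\<integral>x. B x \<partial>P) = (\<Sum>j<n. (\<integral>x. d (x j) \<partial>P))"
      unfolding B_def by (rule Bochner_Integration.integral_sum) (use intdj in auto)
    also have "(\<integral>x. (mu - a)\<^sup>2 \<partial>P) = (mu - a)\<^sup>2" by (simp add: PP.prob_space)
    finally show ?thesis by (simp add: A_def B_def cc_def)
  qed
  also have "\<dots> = real n * v / (real n)\<^sup>2 + (mu - a)\<^sup>2"
    using Edjk Edj by simp
  also have "\<dots> = v / n + (mu - a)\<^sup>2" using n by (simp add: power2_eq_square)
  finally show "(\<integral>x. ((\<Sum>j<n. f (x j)) / n - a)\<^sup>2 \<partial>PiM {..<n} (\<lambda>_. M))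
           = (\<integral>x. (f x - (\<integral>x. f x \<partial>M))\<^sup>2 \<partial>M) / n + ((\<integral>x. f x \<partial>M) - a)\<^sup>2"
    by (simp add: P_def v_def mu_def)
qed



lemma prob_algebra_kernelD:
  assumes "K \<in> MH \<rightarrow>\<^sub>M prob_algebra N" "h \<in> space MH"
  shows "sets (K h) = sets N" "prob_space (K h)"
  using measurable_space[OF assms] by (auto simp: space_prob_algebra)

lemma PiM_kernel_measurable:
  assumes Dc: "Dc \<in> MH \<rightarrow>\<^sub>M prob_algebra N" and fin: "finite I"
  shows "(\<lambda>h. PiM I (\<lambda>j. Dc h)) \<in> MH \<rightarrow>\<^sub>M prob_algebra (PiM I (\<lambda>_. N))"
proof (rule measurable_prob_algebra_generated[where \<Omega>="\<Pi>\<^sub>E j\<in>I. space N" and G="prod_algebra I (\<lambda>_. N)"])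
  show "sets (PiM I (\<lambda>_. N)) = sigma_sets (\<Pi>\<^sub>E j\<in>I. space N) (prod_algebra I (\<lambda>_. N))"
    by (rule sets_PiM)
  show "Int_stable (prod_algebra I (\<lambda>_. N))" by (rule Int_stable_prod_algebra)
  show "prod_algebra I (\<lambda>_. N) \<subseteq> Pow (\<Pi>\<^sub>E j\<in>I. space N)" by (rule prod_algebra_sets_into_space)
next
  fix h assume h: "h \<in> space MH"
  note Dh = prob_algebra_kernelD[OF Dc h]
  show "prob_space (PiM I (\<lambda>j. Dc h))" by (intro prob_space_PiM Dh)
  show "sets (PiM I (\<lambda>j. Dc h)) = sets (PiM I (\<lambda>_. N))" by (intro sets_PiM_cong) (auto simp: Dh)
next
  fix A assume A0: "A \<in> prod_algebra I (\<lambda>_. N)"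
  have "A \<in> {Pi\<^sub>E I X |X. X \<in> (\<Pi> j\<in>I. sets N)}"
    using A0 unfolding prod_algebra_eq_finite[OF fin] by simp
  then obtain X where A: "A = Pi\<^sub>E I X" "X \<in> (\<Pi> j\<in>I. sets N)"
    by auto
  have meas: "(\<lambda>h. \<Prod>j\<in>I. emeasure (Dc h) (X j)) \<in> borel_measurable MH"
    using A by (intro borel_measurable_prod_ennreal
        measurable_compose[OF measurable_prob_algebraD[OF Dc] measurable_emeasure_subprob_algebra]) auto
  have eq: "emeasure (PiM I (\<lambda>j. Dc h)) A = (\<Prod>j\<in>I. emeasure (Dc h) (X j))" if h: "h \<in> space MH" for h
  proof -
    note Dh = prob_algebra_kernelD[OF Dc h]
    interpret Dh: prob_space "Dc h" by (rule Dh(2))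
    interpret P: product_prob_space "\<lambda>j. Dc h" I by unfold_locales
    show ?thesis using A Dh(1) fin by (simp add: P.emeasure_PiM Pi_iff)
  qed
  show "(\<lambda>h. emeasure (PiM I (\<lambda>j. Dc h)) A) \<in> borel_measurable MH"
    by (subst measurable_cong[OF eq]) (auto intro: meas)
qed

lemma kernel_integral:
  fixes f :: "'a \<times> 'b \<Rightarrow> real"
  assumes K: "K \<in> MH \<rightarrow>\<^sub>M prob_algebra N" and MH: "prob_space MH"
    and f[measurable]: "f \<in> borel_measurable (MH \<Otimes>\<^sub>M N)"
    and fb: "\<And>x. x \<in> space (MH \<Otimes>\<^sub>M N) \<Longrightarrow> \<bar>f x\<bar> \<le> B"
  shows "(\<integral>x. f x \<partial>(MH \<bind> (\<lambda>h. distr (K h) (MH \<Otimes>\<^sub>M N) (\<lambda>y. (h,y))))) = (\<integral>h. (\<integral>y. f (h,y) \<partial>K h) \<partial>MH)"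
    and "(\<lambda>h. \<integral>y. f (h,y) \<partial>K h) \<in> borel_measurable MH"
proof -
  define Kd where "Kd = (\<lambda>h. distr (K h) (MH \<Otimes>\<^sub>M N) (\<lambda>y. (h,y)))"
  have Kd: "Kd \<in> MH \<rightarrow>\<^sub>M prob_algebra (MH \<Otimes>\<^sub>M N)"
    unfolding Kd_def by (rule measurable_distr_prob_space2[OF K]) measurable
  have eq: "(\<integral>x. f x \<partial>Kd h) = (\<integral>y. f (h,y) \<partial>K h)" if h: "h \<in> space MH" for h
  proof -
    note Kh = prob_algebra_kernelD[OF K h]
    have "(\<lambda>y. (h,y)) \<in> K h \<rightarrow>\<^sub>M MH \<Otimes>\<^sub>M N"
      using measurable_Pair1'[OF h, of N] by (simp cong: measurable_cong_sets add: Kh(1))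
    then show ?thesis unfolding Kd_def by (intro integral_distr) auto
  qed
  have "(\<integral>x. f x \<partial>(MH \<bind> Kd)) = (\<integral>h. (\<integral>x. f x \<partial>Kd h) \<partial>MH)"
  proof (rule integral_bind[OF f fb measurable_prob_algebraD[OF Kd]])
    show "finite_measure MH" using MH by (rule prob_space.finite_measure)
    show "AE x in MH. emeasure (Kd x) (space (Kd x)) \<le> ennreal 1"
      using prob_space.emeasure_space_1[OF prob_algebra_kernelD(2)[OF Kd]] by (intro AE_I2) simp
  qed
  also have "\<dots> = (\<integral>h. (\<integral>y. f (h,y) \<partial>K h) \<partial>MH)"
    by (rule Bochner_Integration.integral_cong[OF refl eq])
  finally show "(\<integral>x. f x \<partial>(MH \<bind> (\<lambda>h. distr (K h) (MH \<Otimes>\<^sub>M N) (\<lambda>y. (h,y))))) = (\<integral>h. (\<integral>y. f (h,y) \<partial>K h) \<partial>MH)"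
    by (simp add: Kd_def)
  have "(\<lambda>h. \<integral>x. f x \<partial>Kd h) \<in> borel_measurable MH"
    by (rule measurable_compose[OF measurable_prob_algebraD[OF Kd] integral_measurable_subprob_algebra[OF f]])
  then show "(\<lambda>h. \<integral>y. f (h,y) \<partial>K h) \<in> borel_measurable MH"
    by (subst measurable_cong[OF eq[symmetric]]) auto
qed



lemma int01:
  fixes f :: "'a \<Rightarrow> real"
  assumes "prob_space M" "f \<in> borel_measurable M" "\<And>x. x \<in> space M \<Longrightarrow> f x \<in> {0..1}"
  shows "(\<integral>x. f x \<partial>M) \<in> {0..1}"
proof -
  interpret prob_space M by fact
  have i: "integrable M f"
    by (rule integrable_const_bound[where B=1]) (use assms in auto)
  have "0 \<le> (\<integral>x. f x \<partial>M)" using assms by (intro Bochner_Integration.integral_nonneg) auto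
  moreover have "(\<integral>x. f x \<partial>M) \<le> (\<integral>x. 1 \<partial>M)"
    using assms i by (intro integral_mono) auto
  ultimately show ?thesis by (simp add: prob_space)
qed

theorem proposition1:
  fixes MH :: "'h measure" and MK :: "'k measure"
    and Dc :: "'h \<Rightarrow> ('k \<times> bool) measure"
    and loss :: "real \<Rightarrow> bool \<Rightarrow> real" and c :: "'h \<Rightarrow> 'k \<Rightarrow> real"
    and m n :: nat and \<delta> :: real
  assumes "prob_space MH"
    and "Dc \<in> MH \<rightarrow>\<^sub>M prob_algebra (KZ MK)"
    and "(\<lambda>(h,k). c h k) \<in> borel_measurable (MH \<Otimes>\<^sub>M MK)"
    and "\<And>h k. c h k \<in> {0..1}"
    and "\<And>x z. x \<in> {0..1} \<Longrightarrow> loss x z \<in> {0..1}"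
    and "(\<lambda>(h,k,z). loss (c h k) z) \<in> borel_measurable (MH \<Otimes>\<^sub>M KZ MK)"
    and "m > 0" and "n > 0" and "0 < \<delta>" and "\<delta> \<le> 1"
  shows "measure (sample_measure MH MK Dc m n)
           {S \<in> space (sample_measure MH MK Dc m n).
              \<bar>L_D MH MK Dc loss c - L_S m n loss c S\<bar> \<le>
                (let g = ln (2 / \<delta>) in
                 1 / (3 * real m) * (g + sqrt (g\<^sup>2 + 18 * g * real m *
                   (exp_cond_var MH Dc loss c / real n + var_cond_mean MH Dc loss c))))}
         \<ge> 1 - \<delta>"
proof -
  note MH = assms(1)
  interpret MH: prob_space MH by (rule MH)
  define N where "N = KZ MK"
  have Dc': "Dc \<in> MH \<rightarrow>\<^sub>M prob_algebra N" unfolding N_def by (rule assms(2))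
  define F where "F = (\<lambda>(h::'h,k::'k,z::bool). loss (c h k) z)"
  have Fm[measurable]: "F \<in> borel_measurable (MH \<Otimes>\<^sub>M N)" unfolding F_def N_def by (rule assms(6))
  have F01: "F x \<in> {0..1}" for x
    using assms(4,5) by (cases x) (auto simp: F_def)
  have Fb: "\<bar>F x\<bar> \<le> 1" for x using F01[of x] by auto
  define Kn where "Kn = (\<lambda>h. PiM {..<n} (\<lambda>j. Dc h))"
  have Kn: "Kn \<in> MH \<rightarrow>\<^sub>M prob_algebra (PiM {..<n} (\<lambda>_. N))"
    unfolding Kn_def by (rule PiM_kernel_measurable[OF Dc']) simp
  define Y where "Y = (\<lambda>x::'h \<times> (nat \<Rightarrow> 'k \<times> bool). (\<Sum>j<n. F (fst x, snd x j)) / real n)"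
  have Ym[measurable]: "Y \<in> borel_measurable (MH \<Otimes>\<^sub>M PiM {..<n} (\<lambda>_. N))"
    unfolding Y_def by measurable
  have Y01: "Y x \<in> {0..1}" for x
  proof -
    have "0 \<le> (\<Sum>j<n. F (fst x, snd x j))" using F01 by (intro sum_nonneg) auto
    moreover have "(\<Sum>j<n. F (fst x, snd x j)) \<le> (\<Sum>j<n. 1)" using F01 by (intro sum_mono) auto
    ultimately show ?thesis using assms(8) by (auto simp: Y_def)
  qed
  define R where "R = rater_block MH MK Dc n"
  have R_eq: "R = MH \<bind> (\<lambda>h. distr (Kn h) (MH \<Otimes>\<^sub>M PiM {..<n} (\<lambda>_. N)) (\<lambda>y. (h, y)))"
    unfolding R_def rater_block_def Kn_def N_def ..
  have MHsp: "MH \<in> space (prob_algebra MH)" using MH by (simp add: space_prob_algebra)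
  have Knd: "(\<lambda>h. distr (Kn h) (MH \<Otimes>\<^sub>M PiM {..<n} (\<lambda>_. N)) (\<lambda>y. (h, y))) \<in> MH \<rightarrow>\<^sub>M prob_algebra (MH \<Otimes>\<^sub>M PiM {..<n} (\<lambda>_. N))"
    by (rule measurable_distr_prob_space2[OF Kn]) (simp add: case_prod_Pair id_def)
  have Rprob: "prob_space R" unfolding R_eq by (rule prob_space_bind'[OF MHsp Knd])
  interpret R: prob_space R by (rule Rprob)
  have Rsets: "sets R = sets (MH \<Otimes>\<^sub>M PiM {..<n} (\<lambda>_. N))" unfolding R_eq by (rule sets_bind'[OF MHsp Knd])
  have Rint: "(\<integral>x. f x \<partial>R) = (\<integral>h. (\<integral>y. f (h,y) \<partial>Kn h) \<partial>MH)"
    if "f \<in> borel_measurable (MH \<Otimes>\<^sub>M PiM {..<n} (\<lambda>_. N))" "\<And>x. \<bar>f x\<bar> \<le> 1" for f :: "_ \<Rightarrow> real"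
    unfolding R_eq using that by (intro kernel_integral(1)[OF Kn MH]) auto

  define cm where "cm = cond_mean Dc loss c"
  define cv where "cv = cond_var Dc loss c"
  have cm_eq: "cm h = (\<integral>y. F (h,y) \<partial>Dc h)" for h
    unfolding cm_def cond_mean_def F_def by simp
  have cv_eq: "cv h = (\<integral>y. (F (h,y) - cm h)\<^sup>2 \<partial>Dc h)" for h
    unfolding cv_def cond_var_def cm_def[symmetric]
    by (rule Bochner_Integration.integral_cong) (auto simp: F_def split: prod.splits)
  have Dh: "sets (Dc h) = sets N" "prob_space (Dc h)" if "h \<in> space MH" for h
    using prob_algebra_kernelD[OF Dc' that] by auto
  have Fh[measurable]: "(\<lambda>y. F (h,y)) \<in> borel_measurable (Dc h)" if h: "h \<in> space MH" for h
  proof -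
    have "(\<lambda>y. F (h,y)) \<in> borel_measurable N"
      by (rule measurable_compose[OF measurable_Pair1'[OF h] Fm])
    then show ?thesis by (simp cong: measurable_cong_sets add: Dh[OF h])
  qed
  have cm01: "cm h \<in> {0..1}" if "h \<in> space MH" for h
    unfolding cm_eq by (rule int01[OF Dh(2)[OF that] Fh[OF that]]) (use F01 in auto)
  have cm_meas[measurable]: "cm \<in> borel_measurable MH"
  proof -
    have "(\<lambda>h. \<integral>y. F (h,y) \<partial>Dc h) \<in> borel_measurable MH"
      by (rule kernel_integral(2)[OF Dc' MH Fm]) (use Fb in auto)
    then show ?thesis by (simp add: cm_eq[abs_def])
  qed
  define G where "G = (\<lambda>x. (F x - cm (fst x))\<^sup>2)"
  have Gm[measurable]: "G \<in> borel_measurable (MH \<Otimes>\<^sub>M N)" unfolding G_def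
    by (intro borel_measurable_power borel_measurable_diff Fm measurable_compose[OF measurable_fst cm_meas])
  have G01: "G x \<in> {0..1}" if "x \<in> space (MH \<Otimes>\<^sub>M N)" for x
  proof -
    have "fst x \<in> space MH" using that by (auto simp: space_pair_measure)
    then have "cm (fst x) \<in> {0..1}" by (rule cm01)
    moreover have "F x \<in> {0..1}" by (rule F01)
    ultimately have "\<bar>F x - cm (fst x)\<bar> \<le> 1" by auto
    then show ?thesis unfolding G_def by (auto simp: abs_square_le_1)
  qed
  have cv_eq': "cv h = (\<integral>y. G (h,y) \<partial>Dc h)" for h
    unfolding cv_eq G_def by simp
  have cv_meas[measurable]: "cv \<in> borel_measurable MH"
  proof -
    have "(\<lambda>h. \<integral>y. G (h,y) \<partial>Dc h) \<in> borel_measurable MH"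
      by (rule kernel_integral(2)[OF Dc' MH Gm]) (use G01 in force)
    then show ?thesis by (simp add: cv_eq'[abs_def])
  qed
  have cv01: "cv h \<in> {0..1}" if h: "h \<in> space MH" for h
  proof -
    have "(\<lambda>y. G (h,y)) \<in> borel_measurable (Dc h)"
      using measurable_compose[OF measurable_Pair1'[OF h] Gm]
      by (simp cong: measurable_cong_sets add: Dh[OF h])
    moreover have "G (h,y) \<in> {0..1}" if "y \<in> space (Dc h)" for y
      using that h sets_eq_imp_space_eq[OF Dh(1)[OF h]] by (intro G01) (auto simp: space_pair_measure)
    ultimately show ?thesis unfolding cv_eq' by (intro int01[OF Dh(2)[OF h]]) auto
  qed

  define \<mu> where "\<mu> = L_D MH MK Dc loss c"
  have \<mu>_eq: "\<mu> = (\<integral>h. cm h \<partial>MH)"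
  proof -
    have "\<mu> = (\<integral>x. F x \<partial>jointD MH MK Dc)" by (simp add: \<mu>_def L_D_def F_def)
    also have "jointD MH MK Dc = MH \<bind> (\<lambda>h. distr (Dc h) (MH \<Otimes>\<^sub>M N) (\<lambda>y. (h, y)))"
      by (simp add: jointD_def N_def)
    also have "(\<integral>x. F x \<partial>\<dots>) = (\<integral>h. (\<integral>y. F (h,y) \<partial>Dc h) \<partial>MH)"
      by (rule kernel_integral(1)[OF Dc' MH Fm]) (use Fb in auto)
    finally show ?thesis by (simp add: cm_eq)
  qed
  have \<mu>01: "\<mu> \<in> {0..1}" unfolding \<mu>_eq by (rule int01[OF MH cm_meas cm01])

  have blk: "(\<integral>y. Y (h,y) \<partial>Kn h) = cm h"
            "(\<integral>y. (Y (h,y) - \<mu>)\<^sup>2 \<partial>Kn h) = cv h / n + (cm h - \<mu>)\<^sup>2"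
    if h: "h \<in> space MH" for h
  proof -
    have b: "\<And>x. x \<in> space (Dc h) \<Longrightarrow> \<bar>F (h,x)\<bar> \<le> 1" using Fb by auto
    note mv = PiM_mean_var[OF Dh(2)[OF h] Fh[OF h] b assms(8)]
    show "(\<integral>y. Y (h,y) \<partial>Kn h) = cm h"
      using mv(1) by (simp add: Y_def Kn_def cm_eq)
    show "(\<integral>y. (Y (h,y) - \<mu>)\<^sup>2 \<partial>Kn h) = cv h / n + (cm h - \<mu>)\<^sup>2"
      using mv(2)[of \<mu>] by (simp add: Y_def Kn_def cm_eq[symmetric] cv_eq)
  qed

  define Z where "Z = (\<lambda>x. Y x - \<mu>)"
  have ZmR[measurable]: "Z \<in> borel_measurable R"
    unfolding Z_def by (simp cong: measurable_cong_sets add: Rsets)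
  have Zb: "\<bar>Z x\<bar> \<le> 1" for x using Y01[of x] \<mu>01 by (auto simp: Z_def)
  have EY: "(\<integral>x. Y x \<partial>R) = \<mu>"
  proof -
    have "(\<integral>x. Y x \<partial>R) = (\<integral>h. (\<integral>y. Y (h,y) \<partial>Kn h) \<partial>MH)"
      by (rule Rint) (use Y01 in auto)
    also have "\<dots> = (\<integral>h. cm h \<partial>MH)"
      by (rule Bochner_Integration.integral_cong[OF refl blk(1)])
    finally show ?thesis by (simp add: \<mu>_eq)
  qed
  have EZ: "(\<integral>x. Z x \<partial>R) = 0"
  proof -
    have iY: "integrable R Y"
      by (rule R.integrable_const_bound[where B=1])
         (use Y01 in \<open>auto simp: Rsets cong: measurable_cong_sets\<close>)
    show ?thesis unfolding Z_def using iY EY by (simp add: R.prob_space)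
  qed
  define V where "V = exp_cond_var MH Dc loss c / real n + var_cond_mean MH Dc loss c"
  have VZ: "(\<integral>x. (Z x)\<^sup>2 \<partial>R) = V"
  proof -
    have "(\<integral>x. (Z x)\<^sup>2 \<partial>R) = (\<integral>h. (\<integral>y. (Y (h,y) - \<mu>)\<^sup>2 \<partial>Kn h) \<partial>MH)"
      unfolding Z_def by (rule Rint) (use Zb in \<open>auto simp: Z_def abs_square_le_1\<close>)
    also have "\<dots> = (\<integral>h. cv h / n + (cm h - \<mu>)\<^sup>2 \<partial>MH)"
      by (rule Bochner_Integration.integral_cong[OF refl blk(2)])
    also have "\<dots> = (\<integral>h. cv h \<partial>MH) / n + (\<integral>h. (cm h - \<mu>)\<^sup>2 \<partial>MH)"
    proof -
      have i1: "integrable MH cv"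
        by (rule MH.integrable_const_bound[where B=1]) (use cv01 in auto)
      have i2: "integrable MH (\<lambda>h. (cm h - \<mu>)\<^sup>2)"
      proof (rule MH.integrable_const_bound[where B=1])
        show "AE x in MH. norm ((cm x - \<mu>)\<^sup>2) \<le> 1"
        proof (intro AE_I2)
          fix h assume "h \<in> space MH"
          then have "\<bar>cm h - \<mu>\<bar> \<le> 1" using cm01 \<mu>01 by fastforce
          then show "norm ((cm h - \<mu>)\<^sup>2) \<le> 1" by (simp add: abs_square_le_1)
        qed
      qed (intro borel_measurable_power borel_measurable_diff cm_meas borel_measurable_const)
      show ?thesis using i1 i2 by simp
    qed
    also have "\<dots> = V"
      by (simp add: V_def exp_cond_var_def var_cond_mean_def cv_def cm_def[symmetric] \<mu>_eq)
    finally show ?thesis .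
  qed
  have V0: "V \<ge> 0" unfolding VZ[symmetric] by (intro Bochner_Integration.integral_nonneg) auto
  define Ps where "Ps = sample_measure MH MK Dc m n"
  have Ps_eq: "Ps = PiM {..<m} (\<lambda>_. R)" by (simp add: Ps_def sample_measure_def R_def)
  interpret PS: product_prob_space "\<lambda>_. R" "{..<m}" by unfold_locales
  interpret Ps: prob_space Ps unfolding Ps_eq by (rule PS.P.prob_space_axioms)
  define g where "g = ln (2 / \<delta>)"
  have g: "g > 0" unfolding g_def using assms(9,10) by (intro ln_gt_zero) (simp add: field_simps)
  define s where "s = sqrt (g\<^sup>2 + 18 * g * real m * V)"
  have arg0: "0 \<le> g\<^sup>2 + 18 * g * real m * V"
    using g V0 by (intro add_nonneg_nonneg mult_nonneg_nonneg) auto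
  have s0: "s \<ge> 0" unfolding s_def by (rule real_sqrt_ge_zero[OF arg0])
  have s2: "s\<^sup>2 = g\<^sup>2 + 18 * g * real m * V" unfolding s_def by (rule real_sqrt_pow2[OF arg0])
  define t where "t = 1 / (3 * real m) * (g + s)"
  have t: "t > 0" unfolding t_def using g s0 assms(7) by simp
  have tt: "(let g = ln (2 / \<delta>) in
                 1 / (3 * real m) * (g + sqrt (g\<^sup>2 + 18 * g * real m *
                   (exp_cond_var MH Dc loss c / real n + var_cond_mean MH Dc loss c)))) = t"
    by (simp add: Let_def t_def s_def g_def V_def)
  have key: "real m * (t\<^sup>2 / (2*V + 2*t/3)) = g"
  proof -
    have den: "2*V + 2*t/3 > 0" using V0 t by simp
    have e: "(g + s)\<^sup>2 = 18 * g * real m * V + 2 * g * g + 2 * g * s"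
      using s2 by (simp add: power2_eq_square algebra_simps)
    have "real m * t\<^sup>2 = g * (2*V + 2*t/3)"
    proof -
      have "real m * t\<^sup>2 = (g + s)\<^sup>2 / (9 * real m)"
        unfolding t_def using assms(7) by (simp add: power2_eq_square field_simps)
      also have "\<dots> = g * (2*V + 2*t/3)"
        unfolding e t_def using assms(7) by (simp add: field_simps)
      finally show ?thesis .
    qed
    then show ?thesis using den by (simp add: field_simps)
  qed
  have ed: "exp (- g) = \<delta> / 2"
    unfolding g_def using assms(9) by (simp add: exp_minus)
  have VZ': "(\<integral>x. (Z x)\<^sup>2 \<partial>R) \<le> V" using VZ by simp
  define A1 where "A1 = {S \<in> space Ps. real m * t \<le> (\<Sum>i<m. Z (S i))}"
  define A2 where "A2 = {S \<in> space Ps. real m * t \<le> (\<Sum>i<m. - Z (S i))}"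
  have pA1: "measure Ps A1 \<le> \<delta> / 2"
  proof -
    have "measure Ps A1 \<le> exp (- (real m * (t\<^sup>2 / (2*V + 2*t/3))))"
      unfolding A1_def Ps_eq
      by (rule bernstein_iid[OF Rprob ZmR Zb EZ VZ' t V0])
    then show ?thesis using key ed by simp
  qed
  have pA2: "measure Ps A2 \<le> \<delta> / 2"
  proof -
    have mZ: "(\<lambda>x. - Z x) \<in> borel_measurable R" by (rule borel_measurable_uminus[OF ZmR])
    have bZ: "\<bar>- Z x\<bar> \<le> 1" for x using Zb[of x] by simp
    have EZ': "(\<integral>x. - Z x \<partial>R) = 0" using EZ by simp
    have VZ'': "(\<integral>x. (- Z x)\<^sup>2 \<partial>R) \<le> V" using VZ' by simp
    have "measure Ps A2 \<le> exp (- (real m * (t\<^sup>2 / (2*V + 2*t/3))))"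
      unfolding A2_def Ps_eq
      by (rule bernstein_iid[OF Rprob mZ bZ EZ' VZ'' t V0])
    then show ?thesis using key ed by simp
  qed
  have LS: "L_S m n loss c S = (\<Sum>i<m. Y (S i)) / m" for S
  proof -
    have "L_S m n loss c S = (1 / (real m * real n)) * (\<Sum>i<m. \<Sum>j<n. F (fst (S i), snd (S i) j))"
      unfolding L_S_def F_def by (simp add: split_beta)
    also have "\<dots> = (\<Sum>i<m. Y (S i)) / m"
      unfolding Y_def by (simp add: sum_divide_distrib[symmetric])
    finally show ?thesis .
  qed
  have diff: "\<mu> - L_S m n loss c S = - (\<Sum>i<m. Z (S i)) / m" for S
    unfolding LS Z_def using assms(7) by (simp add: sum_subtractf field_simps)
  define Gd where "Gd = {S \<in> space Ps. \<bar>\<mu> - L_S m n loss c S\<bar> \<le> t}"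
  have Gd_eq: "Gd = {S \<in> space Ps. \<bar>- (\<Sum>i<m. Z (S i)) / m\<bar> \<le> t}"
    unfolding Gd_def diff ..
  have ZS: "(\<lambda>S. Z (S i)) \<in> borel_measurable Ps" if "i < m" for i
  proof -
    have "(\<lambda>S. S i) \<in> Ps \<rightarrow>\<^sub>M R"
      unfolding Ps_eq by (rule measurable_component_singleton) (use that in simp)
    then show ?thesis by (rule measurable_compose[OF _ ZmR])
  qed
  have ZS': "(\<lambda>S. - Z (S i)) \<in> borel_measurable Ps" if "i < m" for i
    using borel_measurable_uminus[OF ZS[OF that]] .
  have Sm: "(\<lambda>S. \<Sum>i<m. Z (S i)) \<in> borel_measurable Ps"
    by (rule borel_measurable_sum) (use ZS in simp)
  have Sm': "(\<lambda>S. \<Sum>i<m. - Z (S i)) \<in> borel_measurable Ps"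
    by (rule borel_measurable_sum) (use ZS' in simp)
  have Sm'': "(\<lambda>S. \<bar>- (\<Sum>i<m. Z (S i)) / m\<bar>) \<in> borel_measurable Ps"
    by (intro borel_measurable_abs borel_measurable_divide borel_measurable_uminus Sm borel_measurable_const)
  have Gd_sets: "Gd \<in> sets Ps" unfolding Gd_eq by (rule borel_measurable_le[OF Sm'' borel_measurable_const])
  have A1s: "A1 \<in> sets Ps" unfolding A1_def by (rule borel_measurable_le[OF borel_measurable_const Sm])
  have A2s: "A2 \<in> sets Ps" unfolding A2_def by (rule borel_measurable_le[OF borel_measurable_const Sm'])
  have sub: "space Ps - Gd \<subseteq> A1 \<union> A2"
  proof
    fix S assume S: "S \<in> space Ps - Gd"
    then have "\<not> \<bar>- (\<Sum>i<m. Z (S i)) / m\<bar> \<le> t" unfolding Gd_eq by auto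
    then have "real m * t < \<bar>\<Sum>i<m. Z (S i)\<bar>"
      using assms(7) by (simp add: abs_minus_commute field_simps)
    then have "real m * t \<le> (\<Sum>i<m. Z (S i)) \<or> real m * t \<le> (\<Sum>i<m. - Z (S i))"
      by (simp add: sum_negf) linarith
    then show "S \<in> A1 \<union> A2" using S unfolding A1_def A2_def by auto
  qed
  have "measure Ps (space Ps - Gd) \<le> measure Ps (A1 \<union> A2)"
    using sub A1s A2s by (intro Ps.finite_measure_mono) auto
  also have "\<dots> \<le> measure Ps A1 + measure Ps A2"
    using A1s A2s by (rule measure_Un_le)
  also have "\<dots> \<le> \<delta>" using pA1 pA2 by simp
  finally have "measure Ps (space Ps - Gd) \<le> \<delta>" .
  then have "measure Ps Gd \<ge> 1 - \<delta>"
    using Ps.prob_compl[OF Gd_sets] by simp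
  then show ?thesis
    unfolding tt by (simp add: Gd_def \<mu>_def Ps_def)
qed

end
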